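(* Let $n\ge2$, and let $U_0,U_1,\dots,U_T$ be any unitaries on $H$ (a quantum query algorithm with $T$ queries to the comparison oracle). For each permutation $\sigma$ of $\{0,\dots,n-1\}$ and $0\le t\le T$ let $|\psi_\sigma^t\rangle=U_tO_\sigma U_{t-1}O_\sigma\cdots U_1O_\sigma U_0|\vec0\rangle$ (with $t$ oracle applications), and define $$s_t=\sum_{\sigma,\tau} w(\sigma,\tau)\,\bigl|\langle\psi^t_\sigma|\psi^t_\tau\rangle\bigr|,$$ the sum over all ordered pairs of permutations. Then $|s_{t+1}-s_t|\le 2\pi\, n!$ for all $0\le t\le T-1$.
   Context: For a permutation $\sigma$ of $\{0,\dots,n-1\}$, the comparison matrix $M_\sigma\in\{0,1\}^{n\times n}$ has $(M_\sigma)_{i,j}=1$ if $\sigma(i)\le\sigma(j)$ and $0$ otherwise. $H$ is the Hilbert space spanned by orthonormal vectors $|i,j,b,c\rangle$, $0\le i,j\le n-1$, $b\in\{0,1\}$, $c\in\{0,1\}^w$ for some fixed $w\ge0$, and $O_\sigma$ is the unitary $O_\sigma|i,j,b,c\rangle=|i,j,b\oplus(M_\sigma)_{i,j},c\rangle$. For integers $0\le k\le n-2$ and $1\le d\le n-k-1$, define $\sigma^{(k,d)}=(k+d,k+d-1,\dots,k)\circ\sigma$, where $(k+d,k+d-1,\dots,k)$ is the cyclic permutation sending $k+d\mapsto k+d-1\mapsto\cdots\mapsto k\mapsto k+d$. The weight is $w(\sigma,\tau)=1/d$ if $\tau=\sigma^{(k,d)}$ for some such $k,d$, and $w(\sigma,\tau)=0$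 otherwise. *)

theory Defs
  imports Complex_Main "HOL-Combinatorics.Permutations"
begin

text \<open>Basis labels |i,j,b,c> of the Hilbert space H: i,j < n, b a bit, c a bit string of length w.\<close>
type_synonym basis = "nat \<times> nat \<times> bool \<times> bool list"
type_synonym vec = "basis \<Rightarrow> complex"
type_synonym op = "basis \<Rightarrow> basis \<Rightarrow> complex"

definition basisH :: "nat \<Rightarrow> nat \<Rightarrow> basis set" where
  "basisH n w = {..<n} \<times> {..<n} \<times> (UNIV :: bool set) \<times> {c. length c = w}"

definition inner :: "nat \<Rightarrow> nat \<Rightarrow> vec \<Rightarrow> vec \<Rightarrow> complex" where
  "inner n w u v = (\<Sum>x\<in>basisH n w. cnj (u x) * v x)"

definition apply_op :: "nat \<Rightarrow> nat \<Rightarrow> op \<Rightarrow> vec \<Rightarrow> vec" where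
  "apply_op n w U v = (\<lambda>x. \<Sum>y\<in>basisH n w. U x y * v y)"

definition unitary_op :: "nat \<Rightarrow> nat \<Rightarrow> op \<Rightarrow> bool" where
  "unitary_op n w U \<longleftrightarrow> (\<forall>x\<in>basisH n w. \<forall>y\<in>basisH n w.
      (\<Sum>z\<in>basisH n w. cnj (U z x) * U z y) = (if x = y then 1 else 0))"

definition cmp_mat :: "(nat \<Rightarrow> nat) \<Rightarrow> nat \<Rightarrow> nat \<Rightarrow> bool" where
  "cmp_mat \<sigma> i j \<longleftrightarrow> \<sigma> i \<le> \<sigma> j"

text \<open>O_sigma |i,j,b,c> = |i,j,b xor M_ij,c>, as an action on coefficient vectors.\<close>
definition query_op :: "(nat \<Rightarrow> nat) \<Rightarrow> vec \<Rightarrow> vec" where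
  "query_op \<sigma> v = (\<lambda>(i, j, b, c). v (i, j, b \<noteq> cmp_mat \<sigma> i j, c))"

definition zero_state :: "nat \<Rightarrow> vec" where
  "zero_state w = (\<lambda>x. if x = (0, 0, False, replicate w False) then 1 else 0)"

fun psi :: "nat \<Rightarrow> nat \<Rightarrow> (nat \<Rightarrow> op) \<Rightarrow> (nat \<Rightarrow> nat) \<Rightarrow> nat \<Rightarrow> vec" where
  "psi n w U \<sigma> 0 = apply_op n w (U 0) (zero_state w)"
| "psi n w U \<sigma> (Suc t) = apply_op n w (U (Suc t)) (query_op \<sigma> (psi n w U \<sigma> t))"

definition cyc :: "nat \<Rightarrow> nat \<Rightarrow> nat \<Rightarrow> nat" where
  "cyc k d x = (if x = k then k + d else if k < x \<and> x \<le> k + d then x - 1 else x)"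

definition is_shift :: "nat \<Rightarrow> (nat \<Rightarrow> nat) \<Rightarrow> (nat \<Rightarrow> nat) \<Rightarrow> nat \<Rightarrow> nat \<Rightarrow> bool" where
  "is_shift n \<sigma> \<tau> k d \<longleftrightarrow> k \<le> n - 2 \<and> 1 \<le> d \<and> d \<le> n - k - 1 \<and> \<tau> = cyc k d \<circ> \<sigma>"

definition weight :: "nat \<Rightarrow> (nat \<Rightarrow> nat) \<Rightarrow> (nat \<Rightarrow> nat) \<Rightarrow> real" where
  "weight n \<sigma> \<tau> = (if \<exists>k d. is_shift n \<sigma> \<tau> k d
      then 1 / real (THE d. \<exists>k. is_shift n \<sigma> \<tau> k d) else 0)"

definition s_val :: "nat \<Rightarrow> nat \<Rightarrow> (nat \<Rightarrow> op) \<Rightarrow> nat \<Rightarrow> real" where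
  "s_val n w U t = (\<Sum>\<sigma>\<in>{\<sigma>. \<sigma> permutes {..<n}}. \<Sum>\<tau>\<in>{\<tau>. \<tau> permutes {..<n}}.
      weight n \<sigma> \<tau> * cmod (inner n w (psi n w U \<sigma> t) (psi n w U \<tau> t)))"

end

theory Submission
  imports Defs
begin


definition ff :: "real \<Rightarrow> real \<Rightarrow> real" where
  "ff c y = sqrt c / ((c + y) * sqrt y)"
definition FF :: "real \<Rightarrow> real \<Rightarrow> real" where
  "FF c y = 2 * arctan (sqrt (y / c))"

lemma recip_sqrt_conv:
  fixes x h :: real assumes "0 < h" "h < x"
  shows "2 / sqrt x \<le> 1 / sqrt (x + h) + 1 / sqrt (x - h)"
proof -
  define p where "p = sqrt (x + h)"
  define q where "q = sqrt (x - h)"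
  define s where "s = sqrt x"
  have p: "p > 0" "p^2 = x + h" using assms by (auto simp: p_def)
  have q: "q > 0" "q^2 = x - h" using assms by (auto simp: q_def)
  have s: "s > 0" "s^2 = x" using assms by (auto simp: s_def)
  have "(p + q)^2 \<le> 2 * (p^2 + q^2)"
    using sum_squares_ge_zero[of "p-q" 0] by (simp add: power2_eq_square algebra_simps)
  also have "\<dots> = (2*s)^2" using p q s by (simp add: power2_eq_square)
  finally have pq2: "(p + q)^2 \<le> (2*s)^2" .
  have pq: "p + q \<le> 2 * s"
    by (rule power2_le_imp_le[OF pq2]) (use s in simp)
  have "2 * p * q \<le> s * (p + q)"
  proof -
    have "4 * (p * q) \<le> (p+q)^2"
      using sum_squares_ge_zero[of "p-q" 0] by (simp add: power2_eq_square algebra_simps)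
    also have "\<dots> \<le> (2 * s) * (p + q)" using pq p q
      by (simp add: power2_eq_square mult_right_mono)
    finally show ?thesis by simp
  qed
  then have "2 / s \<le> 1/p + 1/q" using p q s by (simp add: field_simps)
  then show ?thesis by (simp add: p_def q_def s_def)
qed

lemma ff_conv:
  fixes x h c :: real assumes "0 < h" "h < x" "0 < c"
  shows "2 * ff c x \<le> ff c (x + h) + ff c (x - h)"
proof -
  define A1 where "A1 = 1 / (c + (x + h))"
  define A2 where "A2 = 1 / (c + (x - h))"
  define A where "A = 1 / (c + x)"
  define B1 where "B1 = 1 / sqrt (x + h)"
  define B2 where "B2 = 1 / sqrt (x - h)"
  define B where "B = 1 / sqrt x"
  have A12: "A1 \<le> A2" using assms unfolding A1_def A2_def by (simp add: frac_le)
  have B12: "B1 \<le> B2" using assms unfolding B1_def B2_def by (simp add: frac_le)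
  have Apos: "A > 0" "A1 > 0" "A2 > 0" using assms by (auto simp: A_def A1_def A2_def)
  have Bpos: "B > 0" "B1 > 0" "B2 > 0" using assms by (auto simp: B_def B1_def B2_def)
  have hA: "2 * A \<le> A1 + A2"
  proof -
    have cx: "c + x > 0" using assms by simp
    have "2 * (c + x) / ((c+x)*(c+x)) = (c + x) * 2 / ((c+x)*(c+x))" by simp
    also have "\<dots> = 2 / (c + x)" using cx by (intro mult_divide_mult_cancel_left) simp
    finally have "2 * A = 2 * (c + x) / ((c+x)*(c+x))" by (simp add: A_def)
    also have "\<dots> \<le> 2 * (c + x) / ((c+x)*(c+x) - h*h)"
      using assms by (intro divide_left_mono) (auto intro!: mult_pos_pos mult_strict_mono)
    also have "\<dots> = A1 + A2" using assms unfolding A1_def A2_def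
      by (simp add: field_simps)
    finally show ?thesis .
  qed
  have hB: "2 * B \<le> B1 + B2" using recip_sqrt_conv[OF assms(1,2)] by (simp add: B_def B1_def B2_def)
  have cheb: "(A1 + A2) * (B1 + B2) \<le> 2 * (A1 * B1 + A2 * B2)"
  proof -
    have "0 \<le> (A2 - A1) * (B2 - B1)" using A12 B12 by simp
    then show ?thesis by (simp add: algebra_simps)
  qed
  have "4 * (A * B) \<le> (A1 + A2) * (B1 + B2)"
  proof -
    have "(2*A) * (2*B) \<le> (A1 + A2) * (B1 + B2)"
      using hA hB Apos Bpos by (intro mult_mono) auto
    then show ?thesis by simp
  qed
  with cheb have main: "2 * (A * B) \<le> A1 * B1 + A2 * B2" by simp
  have e: "ff c x = sqrt c * (A * B)" "ff c (x+h) = sqrt c * (A1 * B1)" "ff c (x-h) = sqrt c * (A2 * B2)"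
    by (simp_all add: ff_def A_def B_def A1_def B1_def A2_def B2_def)
  have "sqrt c * (2 * (A * B)) \<le> sqrt c * (A1 * B1 + A2 * B2)"
    using main assms by (intro mult_left_mono) auto
  then show ?thesis unfolding e by (simp add: algebra_simps)
qed

lemma aux_eq: "0<c \<Longrightarrow> 0<s \<Longrightarrow> 0<(y::real) \<Longrightarrow>
   c*(sqrt c*2)/(c*(c*(s*2)) + c*(y*(s*2))) = sqrt c/(c*s+y*s)"
proof -
  assume a: "0<c" "0<s" "0<y"
  have e2: "c*(c*(s*2)) + c*(y*(s*2)) = (2*c)*(c*s+y*s)" by (simp add: algebra_simps)
  have e1: "c*(sqrt c*2) = (2*c) * sqrt c" by simp
  have "c*(sqrt c*2)/(c*(c*(s*2)) + c*(y*(s*2))) = ((2*c) * sqrt c)/((2*c)*(c*s+y*s))"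
    by (simp only: e1 e2)
  also have "\<dots> = sqrt c/(c*s+y*s)" using a by (intro mult_divide_mult_cancel_left) simp
  finally show ?thesis .
qed

lemma FF_deriv:
  fixes c y :: real assumes "0 < c" "0 < y"
  shows "(FF c has_real_derivative ff c y) (at y)"
proof -
  have "((\<lambda>y. 2 * arctan (sqrt (y / c))) has_real_derivative
        2 * (inverse (1 + (sqrt (y/c))^2) * (inverse (sqrt (y/c)) / 2 * (1 / c)))) (at y)"
    using assms
    by (auto intro!: derivative_eq_intros DERIV_arctan DERIV_real_sqrt simp: field_simps)
  moreover have "2 * (inverse (1 + (sqrt (y/c))^2) * (inverse (sqrt (y/c)) / 2 * (1 / c))) = ff c y"
    using assms unfolding ff_def
    apply (simp add: real_sqrt_divide field_simps)
    using aux_eq[of c "sqrt y" y] assms by simp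
  ultimately show ?thesis unfolding FF_def by simp
qed

lemma ff_mid:
  fixes c x :: real assumes c: "0 < c" and x: "1/2 \<le> x"
  shows "ff c x \<le> FF c (x + 1/2) - FF c (x - 1/2)"
proof -
  define g where "g h = FF c (x + h) - FF c (x - h) - 2 * h * ff c x" for h
  have "g 0 \<le> g (1/2)"
  proof (rule DERIV_nonneg_imp_increasing_open[of 0 "1/2"])
    fix h :: real assume h: "0 < h" "h < 1/2"
    have d1: "((\<lambda>h. FF c (x + h)) has_real_derivative ff c (x + h) * 1) (at h)"
      by (rule DERIV_chain2[OF FF_deriv]) (use c x h in \<open>auto intro!: derivative_eq_intros\<close>)
    have d2: "((\<lambda>h. FF c (x - h)) has_real_derivative ff c (x - h) * (-1)) (at h)"
      by (rule DERIV_chain2[OF FF_deriv]) (use c x h in \<open>auto intro!: derivative_eq_intros\<close>)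
    have d3: "((\<lambda>z. 2 * z * ff c x) has_real_derivative 2 * 1 * ff c x) (at h)"
      by (auto intro!: derivative_eq_intros)
    have "(g has_real_derivative (ff c (x + h) * 1 - ff c (x - h) * (-1) - 2 * 1 * ff c x)) (at h)"
      unfolding g_def[abs_def]
      using d3 by (intro derivative_intros d1 d2)
    moreover have "0 \<le> ff c (x + h) * 1 - ff c (x - h) * (-1) - 2 * 1 * ff c x"
      using ff_conv[of h x c] h x c by simp
    ultimately show "\<exists>y. (g has_real_derivative y) (at h) \<and> 0 \<le> y" by blast
  next
    show "continuous_on {0..1/2} g" unfolding g_def[abs_def] FF_def
      by (intro continuous_intros) (use c in auto)
  qed simp
  then show ?thesis by (simp add: g_def)
qed

lemma ff_sum_le_pi:
  fixes c :: real assumes c: "0 < c"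
  shows "(\<Sum>j<N. ff c (real j + 1/2)) \<le> pi"
proof -
  have "(\<Sum>j<N. ff c (real j + 1/2)) \<le> (\<Sum>j<N. FF c (real (Suc j)) - FF c (real j))"
  proof (intro sum_mono)
    fix j assume "j \<in> {..<N}"
    have "ff c (real j + 1/2) \<le> FF c (real j + 1/2 + 1/2) - FF c (real j + 1/2 - 1/2)"
      by (rule ff_mid) (use c in auto)
    then show "ff c (real j + 1/2) \<le> FF c (real (Suc j)) - FF c (real j)" by simp
  qed
  also have "\<dots> = FF c (real N) - FF c 0"
    using sum_lessThan_telescope[of "\<lambda>j. FF c (real j)" N] by simp
  also have "\<dots> < pi" using arctan_ubound[of "sqrt (real N / c)"] by (simp add: FF_def)
  finally show ?thesis by simp
qed

definition lamf :: "nat \<Rightarrow> nat \<Rightarrow> real" where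
  "lamf e d = sqrt ((real e - 1/2) / (real d - real e + 1/2))"

lemma lamf_pos: "1 \<le> e \<Longrightarrow> e \<le> d \<Longrightarrow> 0 < lamf e d"
  unfolding lamf_def by (auto intro!: divide_pos_pos)

lemma alg1: "sqrt (a / b) / (a + b) = sqrt a / ((a + b) * sqrt (b::real))"
  by (simp add: real_sqrt_divide mult.commute)

lemma alg2: "0 < a \<Longrightarrow> 0 < b \<Longrightarrow> 1 / ((a + b) * sqrt (b / a)) = sqrt a / ((a + b) * sqrt (b::real))"
  by (simp add: real_sqrt_divide)

lemma A1: assumes e: "1 \<le> e" shows "(\<Sum>d\<in>{e..<M}. lamf e d / real d) \<le> pi"
proof (cases "e \<le> M")
  case False then show ?thesis using pi_gt_zero by simp
next
  case True
  have "(\<Sum>d\<in>{e..<M}. lamf e d / real d) = (\<Sum>d\<in>{0+e..<(M-e)+e}. lamf e d / real d)"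
    using True by simp
  also have "\<dots> = (\<Sum>j\<in>{0..<M-e}. lamf e (j+e) / real (j+e))"
    by (rule sum.shift_bounds_nat_ivl)
  also have "\<dots> = (\<Sum>j<M-e. ff (real e - 1/2) (real j + 1/2))"
  proof (intro sum.cong)
    fix j assume "j \<in> {..<M-e}"
    have p1: "real e - 1/2 > 0" "real j + 1/2 > 0" using e by auto
    have L: "lamf e (j+e) = sqrt ((real e - 1/2) / (real j + 1/2))" unfolding lamf_def by simp
    have D: "real (j+e) = (real e - 1/2) + (real j + 1/2)" by simp
    show "lamf e (j+e) / real (j+e) = ff (real e - 1/2) (real j + 1/2)"
      unfolding L D ff_def by (rule alg1)
  qed auto
  also have "\<dots> \<le> pi" by (rule ff_sum_le_pi) (use e in auto)
  finally show ?thesis .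
qed

lemma A2: assumes f: "1 \<le> f"
  shows "(\<Sum>e\<in>{1..N}. 1 / (real (f + e - 1) * lamf e (f + e - 1))) \<le> pi"
proof -
  have "(\<Sum>e\<in>{1..N}. 1 / (real (f + e - 1) * lamf e (f + e - 1)))
      = (\<Sum>j<N. 1 / (real (f + Suc j - 1) * lamf (Suc j) (f + Suc j - 1)))"
    using sum.atLeast1_atMost_eq[of "\<lambda>e. 1 / (real (f + e - 1) * lamf e (f + e - 1))" N] by simp
  also have "\<dots> = (\<Sum>j<N. ff (real f - 1/2) (real j + 1/2))"
  proof (intro sum.cong refl)
    fix j assume "j \<in> {..<N}"
    have p1: "real f - 1/2 > 0" "real j + 1/2 > 0" using f by auto
    have ee: "real (f + Suc j - 1) = real f + real j" using f by simp
    have L: "lamf (Suc j) (f + Suc j - 1) = sqrt ((real j + 1/2) / (real f - 1/2))"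
      unfolding lamf_def using f by (simp add: of_nat_diff algebra_simps)
    have D: "real (f + Suc j - 1) = (real f - 1/2) + (real j + 1/2)" using f by simp
    show "1 / (real (f + Suc j - 1) * lamf (Suc j) (f + Suc j - 1)) = ff (real f - 1/2) (real j + 1/2)"
      unfolding L D ff_def by (rule alg2) (use p1 in auto)
  qed
  also have "\<dots> \<le> pi" by (rule ff_sum_le_pi) (use f in auto)
  finally show ?thesis .
qed



definition BC :: "nat \<Rightarrow> (bool \<times> bool list) set" where
  "BC w = (UNIV :: bool set) \<times> {c. length c = w}"

lemma finite_BC: "finite (BC w)"
proof -
  have "finite {c :: bool list. set c \<subseteq> UNIV \<and> length c = w}"
    by (rule finite_lists_length_eq) simp
  then show ?thesis unfolding BC_def by simp
qed

lemma basisH_BC: "basisH n w = {..<n} \<times> {..<n} \<times> BC w"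
  unfolding basisH_def BC_def by simp

lemma finite_basis: "finite (basisH n w)"
  unfolding basisH_BC using finite_BC by simp

lemma unitary_inner:
  assumes U: "unitary_op n w U"
  shows "inner n w (apply_op n w U u) (apply_op n w U v) = inner n w u v"
proof -
  let ?B = "basisH n w"
  have "inner n w (apply_op n w U u) (apply_op n w U v)
     = (\<Sum>x\<in>?B. \<Sum>y\<in>?B. \<Sum>z\<in>?B. cnj (U x y * u y) * (U x z * v z))"
    unfolding inner_def apply_op_def cnj_sum sum_product by simp
  also have "\<dots> = (\<Sum>y\<in>?B. \<Sum>x\<in>?B. \<Sum>z\<in>?B. cnj (U x y * u y) * (U x z * v z))"
    by (rule sum.swap)
  also have "\<dots> = (\<Sum>y\<in>?B. \<Sum>z\<in>?B. \<Sum>x\<in>?B. cnj (U x y * u y) * (U x z * v z))"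
    by (intro sum.cong refl sum.swap)
  also have "\<dots> = (\<Sum>y\<in>?B. \<Sum>z\<in>?B. (cnj (u y) * v z) * (\<Sum>x\<in>?B. cnj (U x y) * U x z))"
    by (intro sum.cong refl) (simp add: sum_distrib_left mult_ac)
  also have "\<dots> = (\<Sum>y\<in>?B. \<Sum>z\<in>?B. (cnj (u y) * v z) * (if y = z then 1 else 0))"
    using U unfolding unitary_op_def by (intro sum.cong refl) simp
  also have "\<dots> = (\<Sum>y\<in>?B. cnj (u y) * v y)"
    by (intro sum.cong refl) (simp add: finite_basis if_distrib cong: if_cong)
  finally show ?thesis unfolding inner_def .
qed

definition flip :: "(nat \<Rightarrow> nat) \<Rightarrow> basis \<Rightarrow> basis" where
  "flip \<sigma> x = (case x of (i, j, b, c) \<Rightarrow> (i, j, b \<noteq> cmp_mat \<sigma> i j, c))"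

lemma query_flip: "query_op \<sigma> v = v \<circ> flip \<sigma>"
  unfolding query_op_def flip_def by (auto simp: fun_eq_iff)

lemma flip_flip: "flip \<sigma> (flip \<sigma> x) = x"
  unfolding flip_def by (cases x) auto

lemma flip_in: "x \<in> basisH n w \<Longrightarrow> flip \<sigma> x \<in> basisH n w"
  unfolding flip_def basisH_def by (cases x) auto

lemma inner_query:
  "inner n w (query_op \<sigma> u) (query_op \<tau> v)
     = (\<Sum>x\<in>basisH n w. cnj (u x) * v (flip \<tau> (flip \<sigma> x)))"
  unfolding inner_def query_flip o_def
  by (rule sum.reindex_bij_witness[of _ "flip \<sigma>" "flip \<sigma>"]) (auto simp: flip_flip flip_in)

lemma inner_query_same: "inner n w (query_op \<sigma> u) (query_op \<sigma> v) = inner n w u v"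
  by (simp only: inner_query flip_flip) (simp add: inner_def)

lemma inner_self: "inner n w v v = of_real (\<Sum>x\<in>basisH n w. (cmod (v x))^2)"
  unfolding inner_def of_real_sum
  by (intro sum.cong refl) (simp add: complex_norm_square[symmetric] mult.commute)

lemma psi_norm:
  assumes n: "0 < n" and U: "\<And>i. i \<le> T \<Longrightarrow> unitary_op n w (U i)" and t: "t \<le> T"
  shows "inner n w (psi n w U \<sigma> t) (psi n w U \<sigma> t) = 1"
  using t
proof (induction t)
  case 0
  have "inner n w (zero_state w) (zero_state w)
      = (\<Sum>x\<in>basisH n w. if x = (0, 0, False, replicate w False) then 1 else 0)"
    unfolding inner_def zero_state_def by (intro sum.cong refl) auto
  also have "\<dots> = 1" using n finite_basis[of n w] by (simp add: basisH_def)
  finally show ?case using U[of 0] by (simp add: unitary_inner)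
next
  case (Suc t)
  then show ?case using U[of "Suc t"] by (simp add: unitary_inner inner_query_same)
qed

lemma amgm: fixes a b l :: real assumes "0 < l"
  shows "a * b \<le> (l * a^2 + b^2 / l) / 2"
proof -
  have "0 \<le> (l * a - b)^2" by simp
  then have "2 * l * (a * b) \<le> l * (l * a^2) + b^2" by (simp add: power2_eq_square algebra_simps)
  then show ?thesis using assms by (simp add: field_simps power2_eq_square)
qed

definition Dx :: "(nat \<Rightarrow> nat) \<Rightarrow> (nat \<Rightarrow> nat) \<Rightarrow> basis \<Rightarrow> bool" where
  "Dx \<sigma> \<tau> x = (cmp_mat \<sigma> (fst x) (fst (snd x)) \<noteq> cmp_mat \<tau> (fst x) (fst (snd x)))"

lemma diff_bound:
  assumes lam: "\<And>i j. lam i j > (0::real)"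
  shows "cmod (inner n w (query_op \<sigma> u) (query_op \<tau> v) - inner n w u v)
    \<le> (\<Sum>x\<in>basisH n w. if Dx \<sigma> \<tau> x then lam (fst x) (fst (snd x)) * (cmod (u x))^2
          + (cmod (v x))^2 / lam (fst x) (fst (snd x)) else 0)"
proof -
  let ?B = "basisH n w"
  define g where "g x = flip \<tau> (flip \<sigma> x)" for x
  define lx where "lx x = lam (fst x) (fst (snd x))" for x :: basis
  have gB: "x \<in> ?B \<Longrightarrow> g x \<in> ?B" for x by (simp add: g_def flip_in)
  have gg: "g (g x) = x" for x unfolding g_def flip_def by (cases x) auto
  have gfst: "fst (g x) = fst x" "fst (snd (g x)) = fst (snd x)" for x
    unfolding g_def flip_def by (cases x; auto)+
  have gD: "Dx \<sigma> \<tau> (g x) = Dx \<sigma> \<tau> x" for x unfolding Dx_def gfst ..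
  have gl: "lx (g x) = lx x" for x unfolding lx_def gfst ..
  have gid: "\<not> Dx \<sigma> \<tau> x \<Longrightarrow> g x = x" for x
    unfolding g_def flip_def Dx_def by (cases x) auto
  have lxp: "lx x > 0" for x using lam by (simp add: lx_def)
  define h1 where "h1 x = (if Dx \<sigma> \<tau> x then lx x * (cmod (u x))^2 + (cmod (v x))^2 / (2 * lx x) else 0)" for x
  define h2 where "h2 x = (if Dx \<sigma> \<tau> x then (cmod (v x))^2 / (2 * lx x) else 0)" for x
  have "inner n w (query_op \<sigma> u) (query_op \<tau> v) - inner n w u v
      = (\<Sum>x\<in>?B. cnj (u x) * (v (g x) - v x))"
    unfolding inner_query by (simp add: inner_def g_def sum_subtractf[symmetric] algebra_simps)
  also have "cmod \<dots> \<le> (\<Sum>x\<in>?B. cmod (u x) * cmod (v (g x) - v x))"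
    by (rule order_trans[OF norm_sum]) (simp add: norm_mult)
  also have "\<dots> \<le> (\<Sum>x\<in>?B. h1 x + h2 (g x))"
  proof (intro sum_mono)
    fix x assume "x \<in> ?B"
    show "cmod (u x) * cmod (v (g x) - v x) \<le> h1 x + h2 (g x)"
    proof (cases "Dx \<sigma> \<tau> x")
      case False then show ?thesis by (simp add: gid h1_def h2_def gD)
    next
      case True
      have "cmod (u x) * cmod (v (g x) - v x) \<le> cmod (u x) * (cmod (v (g x)) + cmod (v x))"
        by (intro mult_left_mono norm_triangle_ineq4) simp
      also have "\<dots> = cmod (u x) * cmod (v (g x)) + cmod (u x) * cmod (v x)"
        by (simp add: algebra_simps)
      also have "\<dots> \<le> (lx x * (cmod (u x))^2 + (cmod (v (g x)))^2 / lx x) / 2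
                      + (lx x * (cmod (u x))^2 + (cmod (v x))^2 / lx x) / 2"
        by (intro add_mono amgm lxp)
      also have "\<dots> = h1 x + h2 (g x)"
        using True lxp[of x] by (simp add: h1_def h2_def gD gl field_simps)
      finally show ?thesis .
    qed
  qed
  also have "\<dots> = (\<Sum>x\<in>?B. h1 x) + (\<Sum>x\<in>?B. h2 (g x))" by (rule sum.distrib)
  also have "(\<Sum>x\<in>?B. h2 (g x)) = (\<Sum>x\<in>?B. h2 x)"
    by (rule sum.reindex_bij_witness[of _ g g]) (auto simp: gg gB)
  also have "(\<Sum>x\<in>?B. h1 x) + (\<Sum>x\<in>?B. h2 x) = (\<Sum>x\<in>?B. h1 x + h2 x)"
    by (rule sum.distrib[symmetric])
  also have "\<dots> = (\<Sum>x\<in>?B. if Dx \<sigma> \<tau> x then lam (fst x) (fst (snd x)) * (cmod (u x))^2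
          + (cmod (v x))^2 / lam (fst x) (fst (snd x)) else 0)"
  proof (intro sum.cong refl)
    fix x
    show "h1 x + h2 x = (if Dx \<sigma> \<tau> x then lam (fst x) (fst (snd x)) * (cmod (u x))^2
          + (cmod (v x))^2 / lam (fst x) (fst (snd x)) else 0)"
      using lxp[of x] by (simp add: h1_def h2_def lx_def field_simps)
  qed
  finally show ?thesis .
qed

lemma sum_triple:
  assumes "finite A" "finite C"
  shows "(\<Sum>x\<in>A \<times> A \<times> C. F x) = (\<Sum>p\<in>A \<times> A. \<Sum>c\<in>C. F (fst p, snd p, c))"
proof -
  have "(\<Sum>p\<in>A \<times> A. \<Sum>c\<in>C. F (fst p, snd p, c)) = (\<Sum>q\<in>(A \<times> A) \<times> C. F (fst (fst q), snd (fst q), snd q))"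
    using sum.cartesian_product[of "\<lambda>p c. F (fst p, snd p, c)" C "A \<times> A"] by (simp add: split_def)
  also have "\<dots> = (\<Sum>x\<in>A \<times> A \<times> C. F x)"
    by (rule sum.reindex_bij_witness[of _ "\<lambda>x. ((fst x, fst (snd x)), snd (snd x))"
           "\<lambda>q. (fst (fst q), snd (fst q), snd q)"]) auto
  finally show ?thesis by simp
qed

definition Pm :: "nat \<Rightarrow> vec \<Rightarrow> nat \<Rightarrow> nat \<Rightarrow> real" where
  "Pm w v i j = (\<Sum>bc\<in>BC w. (cmod (v (i, j, bc)))^2)"

lemma Pm_nonneg: "0 \<le> Pm w v i j"
  unfolding Pm_def by (intro sum_nonneg) simp

lemma diff_bound2:
  assumes lam: "\<And>i j. lam i j > (0::real)"
  shows "cmod (inner n w (query_op \<sigma> u) (query_op \<tau> v) - inner n w u v)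
    \<le> (\<Sum>p\<in>{..<n} \<times> {..<n}. if cmp_mat \<sigma> (fst p) (snd p) \<noteq> cmp_mat \<tau> (fst p) (snd p)
          then lam (fst p) (snd p) * Pm w u (fst p) (snd p) + Pm w v (fst p) (snd p) / lam (fst p) (snd p)
          else 0)"
proof -
  note diff_bound[OF lam, of n w \<sigma> u \<tau> v]
  also have "(\<Sum>x\<in>basisH n w. if Dx \<sigma> \<tau> x then lam (fst x) (fst (snd x)) * (cmod (u x))^2
          + (cmod (v x))^2 / lam (fst x) (fst (snd x)) else 0)
     = (\<Sum>p\<in>{..<n} \<times> {..<n}. \<Sum>c\<in>BC w. if cmp_mat \<sigma> (fst p) (snd p) \<noteq> cmp_mat \<tau> (fst p) (snd p)
          then lam (fst p) (snd p) * (cmod (u (fst p, snd p, c)))^2 + (cmod (v (fst p, snd p, c)))^2 / lam (fst p) (snd p)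
          else 0)"
    unfolding basisH_BC sum_triple[OF finite_lessThan finite_BC] Dx_def fst_conv snd_conv ..
  also have "\<dots> = (\<Sum>p\<in>{..<n} \<times> {..<n}. if cmp_mat \<sigma> (fst p) (snd p) \<noteq> cmp_mat \<tau> (fst p) (snd p)
          then lam (fst p) (snd p) * Pm w u (fst p) (snd p) + Pm w v (fst p) (snd p) / lam (fst p) (snd p)
          else 0)"
  proof (intro sum.cong refl)
    fix p :: "nat \<times> nat"
    show "(\<Sum>c\<in>BC w. if cmp_mat \<sigma> (fst p) (snd p) \<noteq> cmp_mat \<tau> (fst p) (snd p)
          then lam (fst p) (snd p) * (cmod (u (fst p, snd p, c)))^2 + (cmod (v (fst p, snd p, c)))^2 / lam (fst p) (snd p)
          else 0) = (if cmp_mat \<sigma> (fst p) (snd p) \<noteq> cmp_mat \<tau> (fst p) (snd p)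
          then lam (fst p) (snd p) * Pm w u (fst p) (snd p) + Pm w v (fst p) (snd p) / lam (fst p) (snd p)
          else 0)"
      unfolding Pm_def sum_distrib_left sum_divide_distrib sum.distrib[symmetric]
      by (cases "cmp_mat \<sigma> (fst p) (snd p) \<noteq> cmp_mat \<tau> (fst p) (snd p)") simp_all
  qed
  finally show ?thesis .
qed

lemma Pm_total:
  assumes n: "0 < n" and U: "\<And>i. i \<le> T \<Longrightarrow> unitary_op n w (U i)" and t: "t \<le> T"
  shows "(\<Sum>p\<in>{..<n} \<times> {..<n}. Pm w (psi n w U \<sigma> t) (fst p) (snd p)) = 1"
proof -
  have "of_real (\<Sum>x\<in>basisH n w. (cmod (psi n w U \<sigma> t x))^2) = (1::complex)"
    using psi_norm[OF n U t] inner_self[of n w "psi n w U \<sigma> t"] by simp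
  then have "(\<Sum>x\<in>basisH n w. (cmod (psi n w U \<sigma> t x))^2) = 1"
    by (simp only: of_real_eq_1_iff)
  then show ?thesis unfolding basisH_BC Pm_def sum_triple[OF finite_lessThan finite_BC] .
qed



definition KD :: "nat \<Rightarrow> (nat \<times> nat) set" where
  "KD n = {(k, d). 1 \<le> d \<and> k + d < n}"

lemma finite_KD: "finite (KD n)"
proof -
  have "KD n \<subseteq> {..<n} \<times> {..<n}" unfolding KD_def by auto
  then show ?thesis by (rule finite_subset) simp
qed

lemma cyc_inj_on: "inj_on (cyc k d) {..<n}"
  unfolding inj_on_def cyc_def by auto

lemma cyc_permutes: assumes "k + d < n" shows "cyc k d permutes {..<n}"
  by (rule inj_imp_permutes[OF cyc_inj_on]) (use assms in \<open>auto simp: cyc_def\<close>)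

lemma cyc_eq_imp: assumes "1 \<le> d" "1 \<le> d'" "cyc k d = cyc k' d'"
  shows "k = k' \<and> d = d'"
proof -
  have h1: "cyc k d k = cyc k' d' k" "cyc k d k' = cyc k' d' k'" using assms(3) by auto
  have "k = k'"
  proof (rule ccontr)
    assume "k \<noteq> k'"
    then consider "k < k'" | "k' < k" by linarith
    then show False
    proof cases
      case 1 then show False using h1(1) assms(1) by (auto simp: cyc_def split: if_splits)
    next
      case 2 then show False using h1(2) assms(2) by (auto simp: cyc_def split: if_splits)
    qed
  qed
  with h1 show ?thesis by (simp add: cyc_def)
qed

lemma shift_iff: assumes "2 \<le> n"
  shows "is_shift n \<sigma> \<tau> k d \<longleftrightarrow> (k, d) \<in> KD n \<and> \<tau> = cyc k d \<circ> \<sigma>"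
  unfolding is_shift_def KD_def using assms by auto

lemma comp_cancel_perm:
  assumes "\<sigma> permutes S" "f \<circ> \<sigma> = g \<circ> \<sigma>" shows "f = g"
proof
  fix x
  have "f (\<sigma> (inv \<sigma> x)) = g (\<sigma> (inv \<sigma> x))" using assms(2) by (metis comp_apply)
  then show "f x = g x" using permutes_inverses(1)[OF assms(1)] by simp
qed

lemma weight_cyc:
  assumes n: "2 \<le> n" and s: "\<sigma> permutes {..<n}" and kd: "(k, d) \<in> KD n"
  shows "weight n \<sigma> (cyc k d \<circ> \<sigma>) = 1 / real d"
proof -
  have ex: "\<exists>k' d'. is_shift n \<sigma> (cyc k d \<circ> \<sigma>) k' d'" using kd shift_iff[OF n] by blast
  have "(THE d'. \<exists>k'. is_shift n \<sigma> (cyc k d \<circ> \<sigma>) k' d') = d"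
  proof (rule the_equality)
    show "\<exists>k'. is_shift n \<sigma> (cyc k d \<circ> \<sigma>) k' d" using kd shift_iff[OF n] by blast
  next
    fix d' assume "\<exists>k'. is_shift n \<sigma> (cyc k d \<circ> \<sigma>) k' d'"
    then obtain k' where "(k', d') \<in> KD n" "cyc k d \<circ> \<sigma> = cyc k' d' \<circ> \<sigma>"
      using shift_iff[OF n] by blast
    then show "d' = d" using cyc_eq_imp[of d d' k k'] comp_cancel_perm[OF s] kd
      by (auto simp: KD_def)
  qed
  then show ?thesis unfolding weight_def using ex by simp
qed

lemma weight_zero:
  assumes n: "2 \<le> n" and "\<tau> \<notin> (\<lambda>(k, d). cyc k d \<circ> \<sigma>) ` KD n"
  shows "weight n \<sigma> \<tau> = 0"
proof -
  have "\<not> (\<exists>k d. is_shift n \<sigma> \<tau> k d)" using assms shift_iff[OF n] by force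
  then show ?thesis unfolding weight_def by (simp only: if_False)
qed

lemma weight_nonneg: "0 \<le> weight n \<sigma> \<tau>"
  unfolding weight_def by simp

lemma sum_weight:
  assumes n: "2 \<le> n" and s: "\<sigma> permutes {..<n}"
  shows "(\<Sum>\<tau>\<in>{\<tau>. \<tau> permutes {..<n}}. weight n \<sigma> \<tau> * G \<tau>)
       = (\<Sum>(k, d)\<in>KD n. G (cyc k d \<circ> \<sigma>) / real d)"
proof -
  let ?f = "\<lambda>(k, d). cyc k d \<circ> \<sigma>"
  have sub: "?f ` KD n \<subseteq> {\<tau>. \<tau> permutes {..<n}}"
    using s by (auto simp: KD_def intro!: permutes_compose cyc_permutes)
  have inj: "inj_on ?f (KD n)"
  proof (rule inj_onI)
    fix x y assume a: "x \<in> KD n" "y \<in> KD n" "?f x = ?f y"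
    obtain k d k' d' where xy: "x = (k, d)" "y = (k', d')" by (cases x; cases y) auto
    have "cyc k d = cyc k' d'" using a(3) comp_cancel_perm[OF s] by (simp add: xy)
    then show "x = y" using cyc_eq_imp[of d d' k k'] a(1,2) by (auto simp: KD_def xy)
  qed
  have "(\<Sum>\<tau>\<in>{\<tau>. \<tau> permutes {..<n}}. weight n \<sigma> \<tau> * G \<tau>) = (\<Sum>\<tau>\<in>?f ` KD n. weight n \<sigma> \<tau> * G \<tau>)"
    by (rule sum.mono_neutral_right) (use sub weight_zero[OF n] in \<open>auto simp: finite_permutations\<close>)
  also have "\<dots> = (\<Sum>x\<in>KD n. weight n \<sigma> (?f x) * G (?f x))"
    using sum.reindex[OF inj, of "\<lambda>\<tau>. weight n \<sigma> \<tau> * G \<tau>"] by (simp add: comp_def)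
  also have "\<dots> = (\<Sum>(k, d)\<in>KD n. G (cyc k d \<circ> \<sigma>) / real d)"
    by (intro sum.cong refl) (auto simp: weight_cyc[OF n s])
  finally show ?thesis .
qed

lemma cyc_flip:
  assumes "(r \<le> r') \<noteq> (cyc k d r \<le> cyc k d r')" "1 \<le> d"
  shows "(r = k \<and> k < r' \<and> r' \<le> k + d) \<or> (r' = k \<and> k < r \<and> r \<le> k + d)"
  using assms by (auto simp: cyc_def split: if_splits)

definition Y :: "nat \<Rightarrow> vec \<Rightarrow> (nat \<Rightarrow> nat) \<Rightarrow> nat \<Rightarrow> nat \<Rightarrow> real" where
  "Y w v \<pi> r r' = Pm w v (inv \<pi> r) (inv \<pi> r') + Pm w v (inv \<pi> r') (inv \<pi> r)"

lemma Y_nonneg: "0 \<le> Y w v \<pi> r r'"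
  unfolding Y_def using Pm_nonneg by (simp add: add_nonneg_nonneg)

lemma step_bound:
  assumes s: "\<sigma> permutes {..<n}" and kd: "(k, d) \<in> KD n" and tau: "\<tau> = cyc k d \<circ> \<sigma>"
  shows "cmod (inner n w (query_op \<sigma> u) (query_op \<tau> v) - inner n w u v)
     \<le> (\<Sum>e\<in>{1..d}. lamf e d * Y w u \<sigma> k (k + e) + Y w v \<tau> (k + e - 1) (k + d) / lamf e d)"
proof -
  have d1: "1 \<le> d" and kdn: "k + d < n" using kd by (auto simp: KD_def)
  have tperm: "\<tau> permutes {..<n}" unfolding tau by (intro permutes_compose s cyc_permutes kdn)
  define dst where "dst i j = (if \<sigma> i \<le> \<sigma> j then \<sigma> j - \<sigma> i else \<sigma> i - \<sigma> j)" for i j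
  define lam where "lam i j = (if 1 \<le> dst i j \<and> dst i j \<le> d then lamf (dst i j) d else 1)" for i j
  have lam_pos: "lam i j > 0" for i j unfolding lam_def using lamf_pos by auto
  define h where "h p = lam (fst p) (snd p) * Pm w u (fst p) (snd p) + Pm w v (fst p) (snd p) / lam (fst p) (snd p)" for p
  have h_nonneg: "0 \<le> h p" for p unfolding h_def using lam_pos[of "fst p" "snd p"] Pm_nonneg
    by (intro add_nonneg_nonneg mult_nonneg_nonneg divide_nonneg_pos) auto
  define Dp where "Dp p = (cmp_mat \<sigma> (fst p) (snd p) \<noteq> cmp_mat \<tau> (fst p) (snd p))" for p
  define f1 where "f1 e = (inv \<sigma> k, inv \<sigma> (k + e))" for e
  define f2 where "f2 e = (inv \<sigma> (k + e), inv \<sigma> k)" for e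
  let ?A = "{..<n} \<times> {..<n}"
  let ?E = "{1..d}"
  have sub: "{p \<in> ?A. Dp p} \<subseteq> f1 ` ?E \<union> f2 ` ?E"
  proof
    fix p assume p: "p \<in> {p \<in> ?A. Dp p}"
    obtain i j where pij: "p = (i, j)" by (cases p)
    have "(\<sigma> i \<le> \<sigma> j) \<noteq> (cyc k d (\<sigma> i) \<le> cyc k d (\<sigma> j))"
      using p by (simp add: pij Dp_def cmp_mat_def tau)
    from cyc_flip[OF this d1]
    have c: "(\<sigma> i = k \<and> k < \<sigma> j \<and> \<sigma> j \<le> k + d) \<or> (\<sigma> j = k \<and> k < \<sigma> i \<and> \<sigma> i \<le> k + d)" .
    have ii: "inv \<sigma> (\<sigma> i) = i" "inv \<sigma> (\<sigma> j) = j" using permutes_inverses(2)[OF s] by auto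
    from c show "p \<in> f1 ` ?E \<union> f2 ` ?E"
    proof
      assume a: "\<sigma> i = k \<and> k < \<sigma> j \<and> \<sigma> j \<le> k + d"
      then have "f1 (\<sigma> j - k) = p" using ii by (simp add: f1_def pij)
      moreover have "\<sigma> j - k \<in> ?E" using a by auto
      ultimately show ?thesis by blast
    next
      assume a: "\<sigma> j = k \<and> k < \<sigma> i \<and> \<sigma> i \<le> k + d"
      then have "f2 (\<sigma> i - k) = p" using ii by (simp add: f2_def pij)
      moreover have "\<sigma> i - k \<in> ?E" using a by auto
      ultimately show ?thesis by blast
    qed
  qed
  have "cmod (inner n w (query_op \<sigma> u) (query_op \<tau> v) - inner n w u v)
      \<le> (\<Sum>p\<in>?A. if Dp p then h p else 0)"
    using diff_bound2[of lam n w \<sigma> u \<tau> v, OF lam_pos] unfolding h_def Dp_def .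
  also have "\<dots> = (\<Sum>p\<in>{p \<in> ?A. Dp p}. h p)"
    by (rule sum.inter_filter[symmetric]) simp
  also have "\<dots> \<le> (\<Sum>p\<in>f1 ` ?E \<union> f2 ` ?E. h p)"
    by (rule sum_mono2[OF _ sub]) (auto simp: h_nonneg)
  also have "\<dots> \<le> (\<Sum>p\<in>f1 ` ?E. h p) + (\<Sum>p\<in>f2 ` ?E. h p)"
  proof -
    have "(\<Sum>p\<in>f1 ` ?E \<union> f2 ` ?E. h p) + (\<Sum>p\<in>f1 ` ?E \<inter> f2 ` ?E. h p)
        = (\<Sum>p\<in>f1 ` ?E. h p) + (\<Sum>p\<in>f2 ` ?E. h p)"
      by (rule sum.union_inter) auto
    moreover have "0 \<le> (\<Sum>p\<in>f1 ` ?E \<inter> f2 ` ?E. h p)" by (intro sum_nonneg h_nonneg)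
    ultimately show ?thesis by linarith
  qed
  also have "\<dots> \<le> (\<Sum>e\<in>?E. h (f1 e)) + (\<Sum>e\<in>?E. h (f2 e))"
    using sum_image_le[of ?E h f1] sum_image_le[of ?E h f2] h_nonneg by (auto simp: comp_def)
  also have "\<dots> = (\<Sum>e\<in>?E. h (f1 e) + h (f2 e))" by (rule sum.distrib[symmetric])
  also have "\<dots> = (\<Sum>e\<in>?E. lamf e d * Y w u \<sigma> k (k + e) + Y w v \<tau> (k + e - 1) (k + d) / lamf e d)"
  proof (intro sum.cong refl)
    fix e assume e: "e \<in> ?E"
    have sk: "\<sigma> (inv \<sigma> k) = k" "\<sigma> (inv \<sigma> (k + e)) = k + e" using permutes_inverses(1)[OF s] by auto
    have l1: "lam (inv \<sigma> k) (inv \<sigma> (k + e)) = lamf e d" using e by (simp add: lam_def dst_def sk)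
    have l2: "lam (inv \<sigma> (k + e)) (inv \<sigma> k) = lamf e d" using e by (simp add: lam_def dst_def sk)
    have t1: "inv \<tau> (k + d) = inv \<sigma> k"
      using permutes_inv_eq[OF tperm] sk by (simp add: tau cyc_def)
    have t2: "inv \<tau> (k + e - 1) = inv \<sigma> (k + e)"
      using permutes_inv_eq[OF tperm] sk e by (simp add: tau cyc_def)
    show "h (f1 e) + h (f2 e) = lamf e d * Y w u \<sigma> k (k + e) + Y w v \<tau> (k + e - 1) (k + d) / lamf e d"
      unfolding h_def f1_def f2_def Y_def t1 t2 fst_conv snd_conv l1 l2
      by (simp add: algebra_simps add_divide_distrib)
  qed
  finally show ?thesis .
qed



definition Pairs :: "nat \<Rightarrow> (nat \<times> nat) set" where
  "Pairs n = {(r, r'). r < r' \<and> r' < n}"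

lemma finite_Pairs: "finite (Pairs n)"
proof -
  have "Pairs n \<subseteq> {..<n} \<times> {..<n}" unfolding Pairs_def by auto
  then show ?thesis by (rule finite_subset) simp
qed

definition TT :: "nat \<Rightarrow> ((nat \<times> nat) \<times> nat) set" where
  "TT n = Sigma (KD n) (\<lambda>(k, d). {1..d})"

lemma finite_TT: "finite (TT n)"
  unfolding TT_def using finite_KD by (auto intro!: finite_SigmaI)

lemma Y_total:
  assumes s: "\<sigma> permutes {..<n}"
    and tot: "(\<Sum>p\<in>{..<n} \<times> {..<n}. Pm w v (fst p) (snd p)) = 1"
  shows "(\<Sum>p\<in>Pairs n. Y w v \<sigma> (fst p) (snd p)) \<le> 1"
proof -
  define G where "G p = Pm w v (inv \<sigma> (fst p)) (inv \<sigma> (snd p))" for p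
  define sw where "sw p = (snd p, fst p)" for p :: "nat \<times> nat"
  have m1: "x < n \<Longrightarrow> \<sigma> x < n" for x using permutes_in_image[OF s, of x] by simp
  have m2: "x < n \<Longrightarrow> inv \<sigma> x < n" for x using permutes_in_image[OF permutes_inv[OF s], of x] by simp
  have G0: "0 \<le> G p" for p by (simp add: G_def Pm_nonneg)
  have "(\<Sum>p\<in>Pairs n. Y w v \<sigma> (fst p) (snd p)) = (\<Sum>p\<in>Pairs n. G p) + (\<Sum>p\<in>Pairs n. G (sw p))"
    unfolding sum.distrib[symmetric] by (simp add: Y_def G_def sw_def)
  also have "(\<Sum>p\<in>Pairs n. G (sw p)) = (\<Sum>p\<in>sw ` Pairs n. G p)"
    by (rule sum.reindex_bij_witness[of _ sw sw]) (auto simp: sw_def)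
  also have "(\<Sum>p\<in>Pairs n. G p) + (\<Sum>p\<in>sw ` Pairs n. G p) = (\<Sum>p\<in>Pairs n \<union> sw ` Pairs n. G p)"
    by (rule sum.union_disjoint[symmetric]) (use finite_Pairs[of n] in \<open>auto simp: Pairs_def sw_def\<close>)
  also have "\<dots> \<le> (\<Sum>p\<in>{..<n} \<times> {..<n}. G p)"
    by (rule sum_mono2) (auto simp: Pairs_def sw_def G0)
  also have "\<dots> = (\<Sum>p\<in>{..<n} \<times> {..<n}. Pm w v (fst p) (snd p))"
    by (rule sum.reindex_bij_witness[of _ "\<lambda>p. (\<sigma> (fst p), \<sigma> (snd p))" "\<lambda>p. (inv \<sigma> (fst p), inv \<sigma> (snd p))"])
       (auto simp: G_def permutes_inverses[OF s] m1 m2)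
  finally show ?thesis using tot by simp
qed

lemma fiber_bound:
  fixes \<alpha> :: "'t \<Rightarrow> real" and X :: "'p \<Rightarrow> real"
  assumes "finite T" "finite P" "\<Phi> ` T \<subseteq> P"
    and fib: "\<And>p. p \<in> P \<Longrightarrow> (\<Sum>t\<in>{t \<in> T. \<Phi> t = p}. \<alpha> t) \<le> pi"
    and X0: "\<And>p. 0 \<le> X p"
  shows "(\<Sum>t\<in>T. \<alpha> t * X (\<Phi> t)) \<le> pi * (\<Sum>p\<in>P. X p)"
proof -
  have "(\<Sum>t\<in>T. \<alpha> t * X (\<Phi> t)) = (\<Sum>p\<in>P. \<Sum>t\<in>{t \<in> T. \<Phi> t = p}. \<alpha> t * X (\<Phi> t))"
    by (rule sum.group[symmetric]) (use assms in auto)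
  also have "\<dots> = (\<Sum>p\<in>P. X p * (\<Sum>t\<in>{t \<in> T. \<Phi> t = p}. \<alpha> t))"
    by (intro sum.cong refl) (auto simp: sum_distrib_left mult.commute)
  also have "\<dots> \<le> (\<Sum>p\<in>P. X p * pi)"
    by (intro sum_mono mult_left_mono fib X0)
  finally show ?thesis by (simp add: sum_distrib_left mult.commute)
qed

lemma part1:
  assumes X0: "\<And>p. 0 \<le> X p"
  shows "(\<Sum>t\<in>TT n. (case t of ((k, d), e) \<Rightarrow> lamf e d / real d) * X (case t of ((k, d), e) \<Rightarrow> (k, k + e)))
      \<le> pi * (\<Sum>p\<in>Pairs n. X p)"
proof (rule fiber_bound[OF finite_TT finite_Pairs _ _ X0])
  show "(\<lambda>t. case t of ((k, d), e) \<Rightarrow> (k, k + e)) ` TT n \<subseteq> Pairs n"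
    by (auto simp: TT_def KD_def Pairs_def)
next
  fix p assume p: "p \<in> Pairs n"
  obtain r r' where pr: "p = (r, r')" by (cases p)
  have rr: "r < r'" "r' < n" using p by (auto simp: pr Pairs_def)
  have fib: "{t \<in> TT n. (case t of ((k, d), e) \<Rightarrow> (k, k + e)) = p} = (\<lambda>d. ((r, d), r' - r)) ` {r' - r..<n - r}"
  proof (rule set_eqI)
    fix t :: "(nat \<times> nat) \<times> nat"
    obtain k d e where t: "t = ((k, d), e)" by (cases t) auto
    show "t \<in> {t \<in> TT n. (case t of ((k, d), e) \<Rightarrow> (k, k + e)) = p} \<longleftrightarrow> t \<in> (\<lambda>d. ((r, d), r' - r)) ` {r' - r..<n - r}"
      using rr by (auto simp: t pr TT_def KD_def)
  qed
  have "(\<Sum>t\<in>{t \<in> TT n. (case t of ((k, d), e) \<Rightarrow> (k, k + e)) = p}. (case t of ((k, d), e) \<Rightarrow> lamf e d / real d))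
      = (\<Sum>d\<in>{r' - r..<n - r}. lamf (r' - r) d / real d)"
    unfolding fib by (subst sum.reindex) (auto simp: inj_on_def)
  also have "\<dots> \<le> pi" by (rule A1) (use rr in auto)
  finally show "(\<Sum>t\<in>{t \<in> TT n. (case t of ((k, d), e) \<Rightarrow> (k, k + e)) = p}. (case t of ((k, d), e) \<Rightarrow> lamf e d / real d)) \<le> pi" .
qed

lemma part2:
  assumes X0: "\<And>p. 0 \<le> X p"
  shows "(\<Sum>t\<in>TT n. (case t of ((k, d), e) \<Rightarrow> 1 / (real d * lamf e d)) * X (case t of ((k, d), e) \<Rightarrow> (k + e - 1, k + d)))
      \<le> pi * (\<Sum>p\<in>Pairs n. X p)"
proof (rule fiber_bound[OF finite_TT finite_Pairs _ _ X0])
  show "(\<lambda>t. case t of ((k, d), e) \<Rightarrow> (k + e - 1, k + d)) ` TT n \<subseteq> Pairs n"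
    by (auto simp: TT_def KD_def Pairs_def)
next
  fix p assume p: "p \<in> Pairs n"
  obtain r r' where pr: "p = (r, r')" by (cases p)
  have rr: "r < r'" "r' < n" using p by (auto simp: pr Pairs_def)
  have fib: "{t \<in> TT n. (case t of ((k, d), e) \<Rightarrow> (k + e - 1, k + d)) = p}
       = (\<lambda>e. ((r + 1 - e, (r' - r) + e - 1), e)) ` {1..r+1}"
  proof (rule set_eqI)
    fix t :: "(nat \<times> nat) \<times> nat"
    obtain k d e where t: "t = ((k, d), e)" by (cases t) auto
    show "t \<in> {t \<in> TT n. (case t of ((k, d), e) \<Rightarrow> (k + e - 1, k + d)) = p} \<longleftrightarrow>
          t \<in> (\<lambda>e. ((r + 1 - e, (r' - r) + e - 1), e)) ` {1..r+1}"
    proof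
      assume "t \<in> {t \<in> TT n. (case t of ((k, d), e) \<Rightarrow> (k + e - 1, k + d)) = p}"
      then have a: "1 \<le> d" "k + d < n" "1 \<le> e" "e \<le> d" "k + e - 1 = r" "k + d = r'"
        by (auto simp: t pr TT_def KD_def)
      then have "e \<in> {1..r+1}" "k = r + 1 - e" "d = (r' - r) + e - 1" by auto
      then show "t \<in> (\<lambda>e. ((r + 1 - e, (r' - r) + e - 1), e)) ` {1..r+1}" unfolding t by blast
    next
      assume "t \<in> (\<lambda>e. ((r + 1 - e, (r' - r) + e - 1), e)) ` {1..r+1}"
      then have a: "e \<in> {1..r+1}" "k = r + 1 - e" "d = (r' - r) + e - 1" by (auto simp: t)
      then show "t \<in> {t \<in> TT n. (case t of ((k, d), e) \<Rightarrow> (k + e - 1, k + d)) = p}"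
        using rr by (auto simp: t pr TT_def KD_def)
    qed
  qed
  have "(\<Sum>t\<in>{t \<in> TT n. (case t of ((k, d), e) \<Rightarrow> (k + e - 1, k + d)) = p}. (case t of ((k, d), e) \<Rightarrow> 1 / (real d * lamf e d)))
      = (\<Sum>e\<in>{1..r+1}. 1 / (real ((r' - r) + e - 1) * lamf e ((r' - r) + e - 1)))"
    unfolding fib by (subst sum.reindex) (auto simp: inj_on_def)
  also have "\<dots> \<le> pi" by (rule A2) (use rr in auto)
  finally show "(\<Sum>t\<in>{t \<in> TT n. (case t of ((k, d), e) \<Rightarrow> (k + e - 1, k + d)) = p}. (case t of ((k, d), e) \<Rightarrow> 1 / (real d * lamf e d))) \<le> pi" .
qed

lemma sum_perm_comp:
  assumes q: "q permutes S"
  shows "(\<Sum>\<sigma>\<in>{\<sigma>. \<sigma> permutes S}. g (q \<circ> \<sigma>)) = (\<Sum>\<tau>\<in>{\<tau>. \<tau> permutes S}. g \<tau>)"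
  by (rule sum.reindex_bij_witness[of _ "\<lambda>\<tau>. inv q \<circ> \<tau>" "\<lambda>\<sigma>. q \<circ> \<sigma>"])
     (auto simp: permutes_compose permutes_inv q o_assoc permutes_inv_o[OF q])



theorem mainTheorem3:
  fixes n w T :: nat and U :: "nat \<Rightarrow> op"
  assumes "n \<ge> 2"
    and "\<And>i. i \<le> T \<Longrightarrow> unitary_op n w (U i)"
    and "t + 1 \<le> T"
  shows "\<bar>s_val n w U (t + 1) - s_val n w U t\<bar> \<le> 2 * pi * fact n"
proof -
  note n = assms(1) and Uu = assms(2) and tT = assms(3)
  have n0: "0 < n" using n by simp
  define P where "P = {\<sigma>. \<sigma> permutes {..<n}}"
  have finP: "finite P" unfolding P_def by (rule finite_permutations) simp
  have cardP: "card P = fact n" unfolding P_def by (rule card_permutations) simp_all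
  define ps where "ps \<sigma> = psi n w U \<sigma> t" for \<sigma>
  define I1 where "I1 \<sigma> \<tau> = inner n w (psi n w U \<sigma> (t+1)) (psi n w U \<tau> (t+1))" for \<sigma> \<tau>
  define I0 where "I0 \<sigma> \<tau> = inner n w (ps \<sigma>) (ps \<tau>)" for \<sigma> \<tau>
  define YY where "YY \<sigma> p = Y w (ps \<sigma>) \<sigma> (fst p) (snd p)" for \<sigma> p
  define \<alpha>1 where "\<alpha>1 t = (case t of ((k, d), e) \<Rightarrow> lamf e d / real d)" for t :: "(nat \<times> nat) \<times> nat"
  define \<alpha>2 where "\<alpha>2 t = (case t of ((k, d), e) \<Rightarrow> 1 / (real d * lamf e d))" for t :: "(nat \<times> nat) \<times> nat"
  define \<Phi>1 where "\<Phi>1 t = (case t of ((k, d), e) \<Rightarrow> (k, k + e))" for t :: "(nat \<times> nat) \<times> nat"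
  define \<Phi>2 where "\<Phi>2 t = (case t of ((k, d), e) \<Rightarrow> (k + e - 1, k + d))" for t :: "(nat \<times> nat) \<times> nat"
  define cy where "cy t = (case t of ((k, d), e) \<Rightarrow> cyc k d)" for t :: "(nat \<times> nat) \<times> nat"
  have YY0: "0 \<le> YY \<sigma> p" for \<sigma> p by (simp add: YY_def Y_nonneg)
  have I1eq: "I1 \<sigma> \<tau> = inner n w (query_op \<sigma> (ps \<sigma>)) (query_op \<tau> (ps \<tau>))" for \<sigma> \<tau>
    using Uu[of "Suc t"] tT by (simp add: I1_def ps_def unitary_inner)
  have step0: "\<bar>s_val n w U (t + 1) - s_val n w U t\<bar> \<le> (\<Sum>\<sigma>\<in>P. \<Sum>\<tau>\<in>P. weight n \<sigma> \<tau> * cmod (I1 \<sigma> \<tau> - I0 \<sigma> \<tau>))"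
  proof -
    have "s_val n w U (t + 1) - s_val n w U t = (\<Sum>\<sigma>\<in>P. \<Sum>\<tau>\<in>P. weight n \<sigma> \<tau> * (cmod (I1 \<sigma> \<tau>) - cmod (I0 \<sigma> \<tau>)))"
      unfolding s_val_def P_def I1_def I0_def ps_def sum_subtractf[symmetric] by (simp add: algebra_simps)
    also have "\<bar>\<dots>\<bar> \<le> (\<Sum>\<sigma>\<in>P. \<bar>\<Sum>\<tau>\<in>P. weight n \<sigma> \<tau> * (cmod (I1 \<sigma> \<tau>) - cmod (I0 \<sigma> \<tau>))\<bar>)"
      by (rule sum_abs)
    also have "\<dots> \<le> (\<Sum>\<sigma>\<in>P. \<Sum>\<tau>\<in>P. \<bar>weight n \<sigma> \<tau> * (cmod (I1 \<sigma> \<tau>) - cmod (I0 \<sigma> \<tau>))\<bar>)"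
      by (intro sum_mono sum_abs)
    also have "\<dots> \<le> (\<Sum>\<sigma>\<in>P. \<Sum>\<tau>\<in>P. weight n \<sigma> \<tau> * cmod (I1 \<sigma> \<tau> - I0 \<sigma> \<tau>))"
    proof (intro sum_mono)
      fix \<sigma> \<tau>
      show "\<bar>weight n \<sigma> \<tau> * (cmod (I1 \<sigma> \<tau>) - cmod (I0 \<sigma> \<tau>))\<bar> \<le> weight n \<sigma> \<tau> * cmod (I1 \<sigma> \<tau> - I0 \<sigma> \<tau>)"
        unfolding abs_mult using weight_nonneg[of n \<sigma> \<tau>]
        by (simp add: mult_left_mono norm_triangle_ineq3)
    qed
    finally show ?thesis .
  qed
  have stepA: "(\<Sum>\<tau>\<in>P. weight n \<sigma> \<tau> * cmod (I1 \<sigma> \<tau> - I0 \<sigma> \<tau>))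
     \<le> (\<Sum>t\<in>TT n. \<alpha>1 t * YY \<sigma> (\<Phi>1 t) + \<alpha>2 t * YY (cy t \<circ> \<sigma>) (\<Phi>2 t))" if s: "\<sigma> \<in> P" for \<sigma>
  proof -
    have sp: "\<sigma> permutes {..<n}" using s by (simp add: P_def)
    have fin: "\<forall>x\<in>KD n. finite ((\<lambda>(k, d). {1..d::nat}) x)" by (auto split: prod.splits)
    have "(\<Sum>\<tau>\<in>P. weight n \<sigma> \<tau> * cmod (I1 \<sigma> \<tau> - I0 \<sigma> \<tau>))
        = (\<Sum>(k, d)\<in>KD n. cmod (I1 \<sigma> (cyc k d \<circ> \<sigma>) - I0 \<sigma> (cyc k d \<circ> \<sigma>)) / real d)"
      unfolding P_def by (rule sum_weight[OF n sp])
    also have "\<dots> \<le> (\<Sum>(k, d)\<in>KD n. (\<Sum>e\<in>{1..d}. lamf e d * YY \<sigma> (k, k + e)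
                  + YY (cyc k d \<circ> \<sigma>) (k + e - 1, k + d) / lamf e d) / real d)"
    proof (intro sum_mono)
      fix x assume x: "x \<in> KD n"
      obtain k d where kd: "x = (k, d)" by (cases x)
      have "cmod (I1 \<sigma> (cyc k d \<circ> \<sigma>) - I0 \<sigma> (cyc k d \<circ> \<sigma>))
          \<le> (\<Sum>e\<in>{1..d}. lamf e d * YY \<sigma> (k, k + e) + YY (cyc k d \<circ> \<sigma>) (k + e - 1, k + d) / lamf e d)"
        unfolding I1eq I0_def YY_def fst_conv snd_conv
        by (rule step_bound[OF sp x[unfolded kd] refl])
      then show "(case x of (k, d) \<Rightarrow> cmod (I1 \<sigma> (cyc k d \<circ> \<sigma>) - I0 \<sigma> (cyc k d \<circ> \<sigma>)) / real d)
          \<le> (case x of (k, d) \<Rightarrow> (\<Sum>e\<in>{1..d}. lamf e d * YY \<sigma> (k, k + e)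
                  + YY (cyc k d \<circ> \<sigma>) (k + e - 1, k + d) / lamf e d) / real d)"
        unfolding kd by (simp add: divide_right_mono)
    qed
    also have "\<dots> = (\<Sum>x\<in>KD n. \<Sum>e\<in>(\<lambda>(k, d). {1..d}) x. \<alpha>1 (x, e) * YY \<sigma> (\<Phi>1 (x, e)) + \<alpha>2 (x, e) * YY (cy (x, e) \<circ> \<sigma>) (\<Phi>2 (x, e)))"
    proof (intro sum.cong refl)
      fix x assume x: "x \<in> KD n"
      obtain k d where kd: "x = (k, d)" by (cases x)
      show "(case x of (k, d) \<Rightarrow> (\<Sum>e\<in>{1..d}. lamf e d * YY \<sigma> (k, k + e)
                  + YY (cyc k d \<circ> \<sigma>) (k + e - 1, k + d) / lamf e d) / real d)
          = (\<Sum>e\<in>(\<lambda>(k, d). {1..d}) x. \<alpha>1 (x, e) * YY \<sigma> (\<Phi>1 (x, e)) + \<alpha>2 (x, e) * YY (cy (x, e) \<circ> \<sigma>) (\<Phi>2 (x, e)))"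
        unfolding kd by (simp add: sum_divide_distrib \<alpha>1_def \<alpha>2_def \<Phi>1_def \<Phi>2_def cy_def add_divide_distrib mult.commute)
    qed
    also have "\<dots> = (\<Sum>t\<in>TT n. \<alpha>1 t * YY \<sigma> (\<Phi>1 t) + \<alpha>2 t * YY (cy t \<circ> \<sigma>) (\<Phi>2 t))"
      unfolding TT_def
      using sum.Sigma[OF finite_KD fin, of "\<lambda>x e. \<alpha>1 (x, e) * YY \<sigma> (\<Phi>1 (x, e)) + \<alpha>2 (x, e) * YY (cy (x, e) \<circ> \<sigma>) (\<Phi>2 (x, e))"]
      by (simp add: case_prod_eta)
    finally show ?thesis .
  qed
  have tot: "(\<Sum>p\<in>Pairs n. YY \<sigma> p) \<le> 1" if s: "\<sigma> \<in> P" for \<sigma>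
    unfolding YY_def ps_def
    by (rule Y_total) (use s Pm_total[OF n0 Uu, of t] tT in \<open>auto simp: P_def\<close>)
  have B1: "(\<Sum>t\<in>TT n. \<alpha>1 t * YY \<sigma> (\<Phi>1 t)) \<le> pi" if s: "\<sigma> \<in> P" for \<sigma>
  proof -
    have "(\<Sum>t\<in>TT n. \<alpha>1 t * YY \<sigma> (\<Phi>1 t)) \<le> pi * (\<Sum>p\<in>Pairs n. YY \<sigma> p)"
      unfolding \<alpha>1_def \<Phi>1_def by (rule part1) (rule YY0)
    also have "\<dots> \<le> pi * 1" by (intro mult_left_mono tot s) simp
    finally show ?thesis by simp
  qed
  have B2: "(\<Sum>t\<in>TT n. \<alpha>2 t * YY \<sigma> (\<Phi>2 t)) \<le> pi" if s: "\<sigma> \<in> P" for \<sigma>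
  proof -
    have "(\<Sum>t\<in>TT n. \<alpha>2 t * YY \<sigma> (\<Phi>2 t)) \<le> pi * (\<Sum>p\<in>Pairs n. YY \<sigma> p)"
      unfolding \<alpha>2_def \<Phi>2_def by (rule part2) (rule YY0)
    also have "\<dots> \<le> pi * 1" by (intro mult_left_mono tot s) simp
    finally show ?thesis by simp
  qed
  have swap2: "(\<Sum>\<sigma>\<in>P. \<Sum>t\<in>TT n. \<alpha>2 t * YY (cy t \<circ> \<sigma>) (\<Phi>2 t)) = (\<Sum>\<tau>\<in>P. \<Sum>t\<in>TT n. \<alpha>2 t * YY \<tau> (\<Phi>2 t))"
  proof -
    have "(\<Sum>\<sigma>\<in>P. \<Sum>t\<in>TT n. \<alpha>2 t * YY (cy t \<circ> \<sigma>) (\<Phi>2 t)) = (\<Sum>t\<in>TT n. \<Sum>\<sigma>\<in>P. \<alpha>2 t * YY (cy t \<circ> \<sigma>) (\<Phi>2 t))"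
      by (rule sum.swap)
    also have "\<dots> = (\<Sum>t\<in>TT n. \<Sum>\<tau>\<in>P. \<alpha>2 t * YY \<tau> (\<Phi>2 t))"
    proof (rule sum.cong[OF refl])
      fix t assume t: "t \<in> TT n"
      have cyp: "cy t permutes {..<n}" using t by (auto simp: TT_def KD_def cy_def intro!: cyc_permutes)
      show "(\<Sum>\<sigma>\<in>P. \<alpha>2 t * YY (cy t \<circ> \<sigma>) (\<Phi>2 t)) = (\<Sum>\<tau>\<in>P. \<alpha>2 t * YY \<tau> (\<Phi>2 t))"
        unfolding P_def using sum_perm_comp[OF cyp, of "\<lambda>\<tau>. \<alpha>2 t * YY \<tau> (\<Phi>2 t)"] by (simp add: o_def)
    qed
    also have "\<dots> = (\<Sum>\<tau>\<in>P. \<Sum>t\<in>TT n. \<alpha>2 t * YY \<tau> (\<Phi>2 t))" by (rule sum.swap)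
    finally show ?thesis .
  qed
  have "\<bar>s_val n w U (t + 1) - s_val n w U t\<bar>
      \<le> (\<Sum>\<sigma>\<in>P. \<Sum>t\<in>TT n. \<alpha>1 t * YY \<sigma> (\<Phi>1 t) + \<alpha>2 t * YY (cy t \<circ> \<sigma>) (\<Phi>2 t))"
    using step0 sum_mono[of P "\<lambda>\<sigma>. \<Sum>\<tau>\<in>P. weight n \<sigma> \<tau> * cmod (I1 \<sigma> \<tau> - I0 \<sigma> \<tau>)"
       "\<lambda>\<sigma>. \<Sum>t\<in>TT n. \<alpha>1 t * YY \<sigma> (\<Phi>1 t) + \<alpha>2 t * YY (cy t \<circ> \<sigma>) (\<Phi>2 t)", OF stepA]
    by linarith
  also have "\<dots> = (\<Sum>\<sigma>\<in>P. \<Sum>t\<in>TT n. \<alpha>1 t * YY \<sigma> (\<Phi>1 t)) + (\<Sum>\<sigma>\<in>P. \<Sum>t\<in>TT n. \<alpha>2 t * YY (cy t \<circ> \<sigma>) (\<Phi>2 t))"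
    by (simp add: sum.distrib)
  also have "\<dots> = (\<Sum>\<sigma>\<in>P. \<Sum>t\<in>TT n. \<alpha>1 t * YY \<sigma> (\<Phi>1 t)) + (\<Sum>\<tau>\<in>P. \<Sum>t\<in>TT n. \<alpha>2 t * YY \<tau> (\<Phi>2 t))"
    by (simp only: swap2)
  also have "\<dots> \<le> (\<Sum>\<sigma>\<in>P. pi) + (\<Sum>\<tau>\<in>P. pi)"
    by (intro add_mono sum_mono B1 B2)
  also have "\<dots> = 2 * pi * fact n" using cardP by simp
  finally show ?thesis .
qed


end
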